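(* Let $k$ be a measurable function on $[0,1]$ and suppose there are real constants $c,\mu,\nu,r$ with $c>0$ and $r>-1$ such that $ct^re^{\mu t}\le k(t)\le ct^re^{\nu t}$ for all $t\in[0,1]$. Let $p\in[1,\infty]$. Then for every $\delta\in(0,1)$, every $j\in\mathbb{N}$ and every polynomial $P$, $$\frac{P(n)\int_0^{1-\delta}k^{*(n-j)}(t)\,dt}{\|V_k^n\|_p}\to0\quad\text{as } n\to\infty \ (n\in\mathbb{N}).$$
   Context: For $f,g$ on $[0,1]$, $(f*g)(t)=\int_0^tf(t-s)g(s)\,ds$, and $f^{*n}$ is the $n$-fold convolution power. For $k\in L^1(0,1)$, $V_k$ is the operator on $L^p(0,1)$ given by $V_ku=k*u$, and $\|V_k^n\|_p$ is the operator norm of its $n$-th power on $L^p(0,1)$. (The paper writes the hypothesis as $r>1$, evidently intending $r>-1$.) *)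

theory Defs
  imports "HOL-Analysis.Analysis" "HOL-Probability.Essential_Supremum"
    "HOL-Computational_Algebra.Polynomial"
begin

definition conv :: "(real \<Rightarrow> real) \<Rightarrow> (real \<Rightarrow> real) \<Rightarrow> real \<Rightarrow> real" where
  "conv f g t = set_lebesgue_integral lebesgue {0..t} (\<lambda>s. f (t - s) * g s)"

text \<open>n-fold convolution power f^{*n} (n >= 1); the value for n = 0 is an
  irrelevant convention (only large n matter in the statement).\<close>
fun conv_pow :: "(real \<Rightarrow> real) \<Rightarrow> nat \<Rightarrow> real \<Rightarrow> real" where
  "conv_pow f 0 = (\<lambda>t. 0)"
| "conv_pow f (Suc 0) = f"
| "conv_pow f (Suc (Suc n)) = conv f (conv_pow f (Suc n))"

definition volterra :: "(real \<Rightarrow> real) \<Rightarrow> (real \<Rightarrow> real) \<Rightarrow> real \<Rightarrow> real" where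
  "volterra k u = conv k u"

definition lp_norm :: "ereal \<Rightarrow> (real \<Rightarrow> real) \<Rightarrow> ereal" where
  "lp_norm p u =
     (if p = \<infinity> then esssup (lebesgue_on {0..1}) (\<lambda>x. ereal \<bar>u x\<bar>)
      else (let N = nn_integral (lebesgue_on {0..1}) (\<lambda>x. ennreal (\<bar>u x\<bar> powr real_of_ereal p))
            in if N = \<infinity> then \<infinity> else ereal (enn2real N powr (1 / real_of_ereal p))))"

definition op_norm :: "ereal \<Rightarrow> ((real \<Rightarrow> real) \<Rightarrow> (real \<Rightarrow> real)) \<Rightarrow> ereal" where
  "op_norm p T = Sup {lp_norm p (T u) | u. u \<in> borel_measurable (lebesgue_on {0..1}) \<and> lp_norm p u \<le> 1}"

end

theory Submission
  imports Defs "HOL-Real_Asymp.Real_Asymp"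
begin
lemma beta_scaled:
  fixes t a b :: real assumes t: "t>0" and a: "a>0" and b: "b>0"
  shows "((\<lambda>s. (t - s) powr (b-1) * s powr (a-1)) has_integral Beta a b * t powr (a+b-1)) {0..t}"
proof -
  have "((\<lambda>x. x powr (a - 1) * (1 - x) powr (b - 1)) has_integral Beta a b) (cbox 0 1)"
    using has_integral_Beta_real[OF a b] by simp
  from has_integral_affinity[OF this, of "1/t" 0]
  have "((\<lambda>s. (s/t) powr (a - 1) * (1 - s/t) powr (b - 1)) has_integral t * Beta a b) ((\<lambda>x. t * x) ` {0..1})"
    using t by simp
  moreover have "(\<lambda>x. t * x) ` {0..1} = {0..t}"
    using t by (auto simp: image_iff intro!: bexI[where x="x/t" for x])
  ultimately have h: "((\<lambda>s. (s/t) powr (a - 1) * (1 - s/t) powr (b - 1)) has_integral t * Beta a b) {0..t}"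
    by simp
  have "((\<lambda>s. t powr (a+b-2) * ((s/t) powr (a - 1) * (1 - s/t) powr (b - 1))) has_integral t powr (a+b-2) * (t * Beta a b)) {0..t}"
    by (rule has_integral_mult_right[OF h])
  moreover have "t powr (a+b-2) * (t * Beta a b) = Beta a b * t powr (a+b-1)"
  proof -
    have "t powr (a+b-1) = t powr ((a+b-2)+1)" by simp
    also have "\<dots> = t powr (a+b-2) * t" using t powr_add[of t "a+b-2" 1] by simp
    finally show ?thesis by simp
  qed
  moreover have "t powr (a+b-2) * ((s/t) powr (a - 1) * (1 - s/t) powr (b - 1)) = (t - s) powr (b-1) * s powr (a-1)"
    if "s \<in> {0..t}" for s
  proof -
    have "1 - s/t = (t-s)/t" using t by (simp add: field_simps)
    moreover have "t powr (a+b-2) = t powr (a-1) * t powr (b-1)" by (simp add: powr_add[symmetric])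
    ultimately show ?thesis using that t by (simp add: powr_divide field_simps)
  qed
  ultimately show ?thesis using has_integral_cong by (smt (verit))
qed

lemma beta_leb:
  fixes t a b :: real assumes t: "t>0" and a: "a>0" and b: "b>0"
  shows "set_integrable lebesgue {0..t} (\<lambda>s. (t - s) powr (b-1) * s powr (a-1))"
    "(LINT s:{0..t}|lebesgue. (t - s) powr (b-1) * s powr (a-1)) = Beta a b * t powr (a+b-1)"
proof -
  have h: "((\<lambda>s. (t - s) powr (b-1) * s powr (a-1)) has_integral Beta a b * t powr (a+b-1)) {0..t}"
    by (rule beta_scaled[OF t a b])
  show i: "set_integrable lebesgue {0..t} (\<lambda>s. (t - s) powr (b-1) * s powr (a-1))"
    unfolding absolutely_integrable_on_def[symmetric]
    by (rule nonnegative_absolutely_integrable_1) (use h in auto)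
  show "(LINT s:{0..t}|lebesgue. (t - s) powr (b-1) * s powr (a-1)) = Beta a b * t powr (a+b-1)"
    using set_lebesgue_integral_eq_integral(2)[OF i] h by (simp add: integral_unique)
qed

lemma conv_at0: "conv f g 0 = 0"
proof -
  have "AE s in lborel. s \<noteq> (0::real)" by (rule AE_lborel_singleton)
  then have "AE s in lebesgue. s \<noteq> (0::real)" by (rule AE_completion)
  then have "AE s in lebesgue. indicator {0..0::real} s *\<^sub>R (f (0 - s) * g s) = 0"
    by eventually_elim (auto simp: indicator_def)
  then show ?thesis unfolding conv_def set_lebesgue_integral_def by (rule integral_eq_zero_AE)
qed

lemma conv_step:
  fixes kb G :: "real \<Rightarrow> real" and c r \<mu> \<nu> L U \<alpha> t :: real
  assumes kbm[measurable]: "kb \<in> borel_measurable borel" and Gm[measurable]: "G \<in> borel_measurable borel"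
    and c: "c>0" and r: "r > -1" and \<alpha>: "\<alpha> > -1" and L: "L \<ge> 0"
    and kl: "\<And>t. t\<in>{0..1} \<Longrightarrow> c * t powr r * exp(\<mu>*t) \<le> kb t"
    and ku: "\<And>t. t\<in>{0..1} \<Longrightarrow> kb t \<le> c * t powr r * exp(\<nu>*t)"
    and gl: "\<And>t. t\<in>{0..1} \<Longrightarrow> L * t powr \<alpha> * exp(\<mu>*t) \<le> G t"
    and gu: "\<And>t. t\<in>{0..1} \<Longrightarrow> G t \<le> U * t powr \<alpha> * exp(\<nu>*t)"
    and t: "t \<in> {0..1}"
  shows "c*L*Beta (\<alpha>+1) (r+1) * t powr (\<alpha>+r+1) * exp(\<mu>*t) \<le> conv kb G t \<and>
         conv kb G t \<le> c*U*Beta (\<alpha>+1) (r+1) * t powr (\<alpha>+r+1) * exp(\<nu>*t)"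
proof (cases "t = 0")
  case True
  then show ?thesis by (simp add: conv_at0)
next
  case False
  with t have tp: "t > 0" by auto
  define \<phi> where "\<phi> s = (t - s) powr r * s powr \<alpha>" for s
  have bi: "set_integrable lebesgue {0..t} \<phi>"
    "(LINT s:{0..t}|lebesgue. \<phi> s) = Beta (\<alpha>+1) (r+1) * t powr (\<alpha>+r+1)"
    using beta_leb[OF tp, of "\<alpha>+1" "r+1"] \<alpha> r unfolding \<phi>_def[abs_def] by (simp_all add: add_ac)
  have kn: "kb s \<ge> 0" if "s \<in> {0..1}" for s
    using kl[OF that] c by (smt (verit) exp_gt_zero mult_nonneg_nonneg powr_ge_zero)
  have gn: "G s \<ge> 0" if "s \<in> {0..1}" for s
    using gl[OF that] L by (smt (verit) exp_gt_zero mult_nonneg_nonneg powr_ge_zero)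
  have low: "c*L*exp(\<mu>*t) * \<phi> s \<le> kb (t-s) * G s" and up: "kb (t-s) * G s \<le> c*U*exp(\<nu>*t) * \<phi> s"
    and nn: "0 \<le> kb (t-s) * G s"
    if s: "s \<in> {0..t}" for s
  proof -
    have s1: "t - s \<in> {0..1}" "s \<in> {0..1}" using s t by auto
    have e1: "exp (\<mu>*(t-s)) * exp(\<mu> * s) = exp(\<mu>*t)" by (simp add: exp_add[symmetric] algebra_simps)
    have e2: "exp (\<nu>*(t-s)) * exp(\<nu> * s) = exp(\<nu>*t)" by (simp add: exp_add[symmetric] algebra_simps)
    have "(c * (t-s) powr r * exp(\<mu>*(t-s))) * (L * s powr \<alpha> * exp(\<mu> * s)) \<le> kb (t-s) * G s"
      by (rule mult_mono[OF kl[OF s1(1)] gl[OF s1(2)]]) (use c L kn s1 in auto)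
    then show "c*L*exp(\<mu>*t) * \<phi> s \<le> kb (t-s) * G s"
      unfolding \<phi>_def e1[symmetric] by (simp add: algebra_simps)
    have "kb (t-s) * G s \<le> (c * (t-s) powr r * exp(\<nu>*(t-s))) * (U * s powr \<alpha> * exp(\<nu> * s))"
      by (rule mult_mono[OF ku[OF s1(1)] gu[OF s1(2)]]) (use kn gn s1 c in auto)
    then show "kb (t-s) * G s \<le> c*U*exp(\<nu>*t) * \<phi> s"
      unfolding \<phi>_def e2[symmetric] by (simp add: algebra_simps)
    show "0 \<le> kb (t-s) * G s" using kn gn s1 by auto
  qed
  have i1: "set_integrable lebesgue {0..t} (\<lambda>s. c*L*exp(\<mu>*t) * \<phi> s)"
    using bi(1) by simp
  have i2: "set_integrable lebesgue {0..t} (\<lambda>s. c*U*exp(\<nu>*t) * \<phi> s)"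
    using bi(1) by simp
  have meas: "set_borel_measurable lebesgue {0..t} (\<lambda>s. kb (t-s) * G s)"
    unfolding set_borel_measurable_def
    by (rule measurable_completion) measurable
  have i3: "set_integrable lebesgue {0..t} (\<lambda>s. kb (t-s) * G s)"
  proof (rule set_integrable_bound[OF i2 meas])
    have "norm (kb (t-s) * G s) \<le> norm (c*U*exp(\<nu>*t) * \<phi> s)" if "s \<in> {0..t}" for s
    proof -
      have "0 \<le> kb (t-s) * G s" "kb (t-s) * G s \<le> c*U*exp(\<nu>*t) * \<phi> s" using up nn that by auto
      then show ?thesis by simp
    qed
    then show "AE x in lebesgue. x \<in> {0..t} \<longrightarrow> norm (kb (t-x) * G x) \<le> norm (c*U*exp(\<nu>*t) * \<phi> x)"
      by (intro AE_I2) auto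
  qed
  have "(LINT s:{0..t}|lebesgue. c*L*exp(\<mu>*t) * \<phi> s) \<le> (LINT s:{0..t}|lebesgue. kb (t-s) * G s)"
    by (rule set_integral_mono[OF i1 i3 low])
  moreover have "(LINT s:{0..t}|lebesgue. kb (t-s) * G s) \<le> (LINT s:{0..t}|lebesgue. c*U*exp(\<nu>*t) * \<phi> s)"
    by (rule set_integral_mono[OF i3 i2 up])
  ultimately show ?thesis
    unfolding conv_def using bi(2) by (simp add: algebra_simps)
qed

lemma conv_borel:
  fixes kb G :: "real \<Rightarrow> real"
  assumes [measurable]: "kb \<in> borel_measurable borel" "G \<in> borel_measurable borel"
  shows "conv kb G \<in> borel_measurable borel"
proof -
  have e: "indicator {0..t} s = indicator {p::real\<times>real. 0 \<le> snd p \<and> snd p \<le> fst p} (t,s)" for t s :: real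
    by (auto simp: indicator_def)
  have "(\<lambda>p::real\<times>real. indicator {p::real\<times>real. 0 \<le> snd p \<and> snd p \<le> fst p} p *\<^sub>R (kb (fst p - snd p) * G (snd p))) \<in> borel_measurable (borel \<Otimes>\<^sub>M lborel)"
    by (subst measurable_cong_sets[OF sets_pair_measure_cong[OF refl sets_lborel] refl]) measurable
  then have m: "(\<lambda>t. LINT s|lborel. indicator {0..t} s *\<^sub>R (kb (t - s) * G s)) \<in> borel_measurable borel"
    by (intro lborel.borel_measurable_lebesgue_integral) (simp add: e case_prod_unfold)
  have "conv kb G t = (LINT s|lborel. indicator {0..t} s *\<^sub>R (kb (t - s) * G s))" for t
    unfolding conv_def set_lebesgue_integral_def by (rule integral_completion) measurable
  then have "conv kb G = (\<lambda>t. LINT s|lborel. indicator {0..t} s *\<^sub>R (kb (t - s) * G s))" by (rule ext)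
  then show ?thesis using m by simp
qed

lemma conv_iter:
  fixes kb G0 :: "real \<Rightarrow> real" and c r \<mu> \<nu> L0 U0 \<alpha>0 :: real
  assumes kbm[measurable]: "kb \<in> borel_measurable borel" and Gm[measurable]: "G0 \<in> borel_measurable borel"
    and c: "c>0" and r: "r > -1" and \<alpha>: "\<alpha>0 > -1" and L: "L0 \<ge> 0"
    and kl: "\<And>t. t\<in>{0..1} \<Longrightarrow> c * t powr r * exp(\<mu>*t) \<le> kb t"
    and ku: "\<And>t. t\<in>{0..1} \<Longrightarrow> kb t \<le> c * t powr r * exp(\<nu>*t)"
    and gl: "\<And>t. t\<in>{0..1} \<Longrightarrow> L0 * t powr \<alpha>0 * exp(\<mu>*t) \<le> G0 t"
    and gu: "\<And>t. t\<in>{0..1} \<Longrightarrow> G0 t \<le> U0 * t powr \<alpha>0 * exp(\<nu>*t)"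
  shows "(conv kb ^^ n) G0 \<in> borel_measurable borel \<and>
    (\<forall>t\<in>{0..1}. L0 * Gamma (\<alpha>0+1) * (c * Gamma (r+1))^n / Gamma (\<alpha>0+1+n*(r+1)) * t powr (\<alpha>0 + n*(r+1)) * exp(\<mu>*t) \<le> (conv kb ^^ n) G0 t
      \<and> (conv kb ^^ n) G0 t \<le> U0 * Gamma (\<alpha>0+1) * (c * Gamma (r+1))^n / Gamma (\<alpha>0+1+n*(r+1)) * t powr (\<alpha>0 + n*(r+1)) * exp(\<nu>*t))"
proof (induction n)
  case 0
  have "Gamma (\<alpha>0+1) > 0" using \<alpha> by simp
  then show ?case using gl gu by simp
next
  case (Suc n)
  define G where "G = (conv kb ^^ n) G0"
  define \<alpha> where "\<alpha> = \<alpha>0 + n*(r+1)"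
  define F where "F = Gamma (\<alpha>0+1) * (c * Gamma (r+1))^n / Gamma (\<alpha>0+1+n*(r+1))"
  have ap: "\<alpha> > -1" using \<alpha> r unfolding \<alpha>_def
    by (smt (verit) mult_nonneg_nonneg of_nat_0_le_iff)
  have Fn: "F \<ge> 0" unfolding F_def using \<alpha> r c ap \<alpha>_def by (simp add: add_ac)
  have Gm: "G \<in> borel_measurable borel" using Suc.IH G_def by simp
  have IH: "\<And>t. t\<in>{0..1} \<Longrightarrow> (L0*F) * t powr \<alpha> * exp(\<mu>*t) \<le> G t"
     "\<And>t. t\<in>{0..1} \<Longrightarrow> G t \<le> (U0*F) * t powr \<alpha> * exp(\<nu>*t)"
    using Suc.IH unfolding G_def F_def \<alpha>_def by (auto simp: mult_ac)
  have st: "c*(L0*F)*Beta (\<alpha>+1) (r+1) * t powr (\<alpha>+r+1) * exp(\<mu>*t) \<le> conv kb G t \<and>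
         conv kb G t \<le> c*(U0*F)*Beta (\<alpha>+1) (r+1) * t powr (\<alpha>+r+1) * exp(\<nu>*t)" if "t\<in>{0..1}" for t
    by (rule conv_step[OF kbm Gm c r ap _ kl ku IH that]) (use L Fn in auto)
  have g1: "Gamma (\<alpha>+1) > 0" "Gamma (r+1) > 0" using ap r by auto
  define Fs where "Fs = Gamma (\<alpha>0+1) * (c * Gamma (r+1))^(Suc n) / Gamma (\<alpha>0+1+(Suc n)*(r+1))"
  have eq: "c * F * Beta (\<alpha>+1) (r+1) = Fs"
    unfolding F_def Fs_def Beta_def \<alpha>_def using g1 unfolding \<alpha>_def
    by (simp add: field_simps add_ac)
  have eqL: "c*(L0*F)*Beta (\<alpha>+1) (r+1) = L0 * Fs" and eqU: "c*(U0*F)*Beta (\<alpha>+1) (r+1) = U0 * Fs"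
    by (simp_all only: eq[symmetric] mult_ac)
  have ex: "\<alpha>+r+1 = \<alpha>0 + (Suc n)*(r+1)" unfolding \<alpha>_def by (simp add: algebra_simps)
  have "\<forall>t\<in>{0..1}. L0 * Fs * t powr (\<alpha>0 + (Suc n)*(r+1)) * exp(\<mu>*t) \<le> (conv kb ^^ Suc n) G0 t
      \<and> (conv kb ^^ Suc n) G0 t \<le> U0 * Fs * t powr (\<alpha>0 + (Suc n)*(r+1)) * exp(\<nu>*t)"
    using st unfolding eqL eqU ex G_def by simp
  moreover have "(conv kb ^^ Suc n) G0 \<in> borel_measurable borel"
    using conv_borel[OF kbm Gm] unfolding G_def by simp
  ultimately show ?case unfolding Fs_def by (simp only: times_divide_eq_right mult.assoc)
qed

lemma meas_AE_lebesgue: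
  fixes f g :: "real \<Rightarrow> real"
  assumes g: "g \<in> borel_measurable lebesgue" and ae: "AE x in lebesgue. f x = g x"
  shows "f \<in> borel_measurable lebesgue"
proof (rule measurableI)
  fix A :: "real set" assume A: "A \<in> sets borel"
  have 1: "g -` A \<inter> space lebesgue \<in> sets lebesgue" using g A by (rule measurable_sets)
  have 2: "AE x in lebesgue. x \<in> g -` A \<inter> space lebesgue \<longleftrightarrow> x \<in> f -` A \<inter> space lebesgue"
    using ae by eventually_elim auto
  show "f -` A \<inter> space lebesgue \<in> sets lebesgue"
    by (rule completion.in_sets_AE[OF 2 1]) auto
qed auto

lemma AE_reflect:
  assumes "AE x in lborel. P (x::real)"
  shows "AE s in lborel. P (t - s)"
proof -
  from assms obtain N where N: "{x \<in> space lborel. \<not> P x} \<subseteq> N" "N \<in> null_sets lborel"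
    by (rule AE_E) (metis null_setsI sets_lborel)
  have "AE x in lborel. x \<notin> N" using N(2) by (rule AE_not_in)
  then have "AE x in lborel. (t + (-1) * x) \<notin> N"
    by (intro AE_borel_affine) (use N(2) in \<open>auto simp: pred_def\<close>)
  then show ?thesis by (rule AE_mp) (use N(1) in \<open>auto intro!: AE_I2\<close>)
qed

lemma kb_exists:
  fixes k :: "real \<Rightarrow> real" and c r \<mu> \<nu> :: real
  assumes k_meas: "k \<in> borel_measurable (lebesgue_on {0..1})"
    and lower: "\<And>t. t \<in> {0<..1} \<Longrightarrow> c * t powr r * exp (\<mu> * t) \<le> k t"
    and upper: "\<And>t. t \<in> {0<..1} \<Longrightarrow> k t \<le> c * t powr r * exp (\<nu> * t)"
  shows "\<exists>kb. kb \<in> borel_measurable borel \<and>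
     (\<forall>t\<in>{0..1}. c * t powr r * exp (\<mu> * t) \<le> kb t \<and> kb t \<le> c * t powr r * exp (\<nu> * t)) \<and>
     (AE x in lborel. x \<in> {0<..1} \<longrightarrow> k x = kb x)"
proof -
  have "(\<lambda>x. indicator {0..1} x *\<^sub>R k x) \<in> borel_measurable lebesgue"
    using k_meas by (subst (asm) borel_measurable_restrict_space_iff) auto
  then obtain k0 where k0: "k0 \<in> borel_measurable lborel" and ae: "AE x in lborel. indicator {0..1} x *\<^sub>R k x = k0 x"
    using completion_ex_borel_measurable_real by blast
  have k0b[measurable]: "k0 \<in> borel_measurable borel" using k0 by (simp add: measurable_lborel1)
  define kb where "kb x = (if x \<in> {0<..1} then max (c * x powr r * exp (\<mu> * x)) (min (c * x powr r * exp (\<nu> * x)) (k0 x)) else 0)" for x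
  have "kb \<in> borel_measurable borel" unfolding kb_def by measurable
  moreover have "\<forall>t\<in>{0..1}. c * t powr r * exp (\<mu> * t) \<le> kb t \<and> kb t \<le> c * t powr r * exp (\<nu> * t)"
  proof
    fix t :: real assume t: "t \<in> {0..1}"
    show "c * t powr r * exp (\<mu> * t) \<le> kb t \<and> kb t \<le> c * t powr r * exp (\<nu> * t)"
    proof (cases "t = 0")
      case True then show ?thesis by (simp add: kb_def)
    next
      case False
      with t have "t \<in> {0<..1}" by auto
      with lower[OF this] upper[OF this] show ?thesis by (auto simp: kb_def)
    qed
  qed
  moreover have "AE x in lborel. x \<in> {0<..1} \<longrightarrow> k x = kb x"
    using ae
  proof eventually_elim
    case (elim x)
    show ?case
    proof
      assume x: "x \<in> {0<..1}"
      then have "k x = k0 x" using elim by (auto simp: indicator_def)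
      with lower[OF x] upper[OF x] x show "k x = kb x" by (auto simp: kb_def)
    qed
  qed
  ultimately show ?thesis by blast
qed

lemma conv_cong_kb:
  fixes k kb g G :: "real \<Rightarrow> real"
  assumes kbm[measurable]: "kb \<in> borel_measurable borel" and Gm[measurable]: "G \<in> borel_measurable borel"
    and aek: "AE x in lborel. x \<in> {0<..1} \<longrightarrow> k x = kb x" and t: "t \<in> {0..1}"
    and aeg: "AE s in lborel. s \<in> {0..t} \<longrightarrow> g s = G s"
  shows "conv k g t = conv kb G t"
proof -
  have a1: "AE s in lborel. (t - s) \<in> {0<..1} \<longrightarrow> k (t - s) = kb (t - s)"
    by (rule AE_reflect[OF aek])
  have a2: "AE s in lborel. s \<noteq> t" by (rule AE_lborel_singleton)
  have "AE s in lborel. indicator {0..t} s *\<^sub>R (k (t - s) * g s) = indicator {0..t} s *\<^sub>R (kb (t - s) * G s)"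
    using a1 a2 aeg
  proof eventually_elim
    case (elim s)
    show ?case
    proof (cases "s \<in> {0..t}")
      case True
      with elim t have "t - s \<in> {0<..1}" by auto
      with elim True show ?thesis by auto
    qed simp
  qed
  then have ae: "AE s in lebesgue. indicator {0..t} s *\<^sub>R (k (t - s) * g s) = indicator {0..t} s *\<^sub>R (kb (t - s) * G s)"
    by (rule AE_completion)
  have m2: "(\<lambda>s. indicator {0..t} s *\<^sub>R (kb (t - s) * G s)) \<in> borel_measurable lebesgue"
    by (rule measurable_completion) measurable
  have m1: "(\<lambda>s. indicator {0..t} s *\<^sub>R (k (t - s) * g s)) \<in> borel_measurable lebesgue"
    by (rule meas_AE_lebesgue[OF m2 ae])
  show ?thesis unfolding conv_def set_lebesgue_integral_def
    by (rule integral_cong_AE[OF m1 m2 ae])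
qed
lemma emeasure_leb01: "a \<in> {0..1} \<Longrightarrow> emeasure (lebesgue_on {0..1}) {a..1::real} = ennreal (1 - a)"
  by (subst emeasure_restrict_space) auto

lemma lp_le1:
  fixes u :: "real \<Rightarrow> real" and p :: ereal
  assumes p: "1 \<le> p" and b: "\<And>x. x\<in>{0..1} \<Longrightarrow> \<bar>u x\<bar> \<le> 1"
    and um: "u \<in> borel_measurable (lebesgue_on {0..1})"
  shows "lp_norm p u \<le> 1"
proof (cases "p = \<infinity>")
  case True
  have "esssup (lebesgue_on {0..1}) (\<lambda>x. ereal \<bar>u x\<bar>) \<le> 1"
    by (rule esssup_I) (use um b in \<open>auto intro!: AE_I2\<close>)
  then show ?thesis using True by (simp add: lp_norm_def)
next
  case False
  define q where "q = real_of_ereal p"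
  have q: "q \<ge> 1" using p False unfolding q_def by (cases p) auto
  define N where "N = nn_integral (lebesgue_on {0..1}) (\<lambda>x. ennreal (\<bar>u x\<bar> powr q))"
  have "N \<le> nn_integral (lebesgue_on {0..1::real}) (\<lambda>x. 1)"
    unfolding N_def by (rule nn_integral_mono) (use b q in \<open>auto simp: powr_le1\<close>)
  also have "\<dots> = 1" using emeasure_leb01[of 0] by (simp add: nn_integral_const)
  finally have N1: "N \<le> 1" .
  then have Nf: "N \<noteq> \<infinity>" by (auto simp: top_unique)
  have "enn2real N \<le> 1" using enn2real_mono[OF N1] by simp
  then have "enn2real N powr (1/q) \<le> 1" using q by (intro powr_le1) auto
  then show ?thesis using False Nf unfolding lp_norm_def by (simp add: Let_def N_def q_def)
qed

lemma lp_ge: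
  fixes f :: "real \<Rightarrow> real" and p :: ereal and a m :: real
  assumes p: "1 \<le> p" and a: "0 < a" "a < 1" and m: "m \<ge> 0" and b: "\<And>x. x\<in>{a..1} \<Longrightarrow> m \<le> \<bar>f x\<bar>"
  shows "ereal (m * (1 - a)) \<le> lp_norm p f"
proof (cases "p = \<infinity>")
  case True
  have "ereal m \<le> esssup (lebesgue_on {0..1}) (\<lambda>x. ereal \<bar>f x\<bar>)"
  proof (cases "(\<lambda>x. ereal \<bar>f x\<bar>) \<in> borel_measurable (lebesgue_on {0..1})")
    case False then show ?thesis by (simp add: esssup_non_measurable)
  next
    case True
    show ?thesis
    proof (rule ccontr)
      assume "\<not> ?thesis"
      then have lt: "esssup (lebesgue_on {0..1}) (\<lambda>x. ereal \<bar>f x\<bar>) < ereal m" by simp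
      have "AE x in lebesgue_on {0..1}. x \<notin> {a..1}"
        using esssup_AE[of "\<lambda>x. ereal \<bar>f x\<bar>" "lebesgue_on {0..1}"]
      proof eventually_elim
        case (elim x)
        show ?case
        proof
          assume "x \<in> {a..1}"
          then have "m \<le> \<bar>f x\<bar>" using b by simp
          moreover have "ereal \<bar>f x\<bar> < ereal m" using elim lt by (rule le_less_trans)
          ultimately show False by simp
        qed
      qed
      then have "emeasure (lebesgue_on {0..1}) {a..1} = 0"
        by (subst (asm) AE_iff_measurable[of "{a..1}"]) (use a in \<open>auto simp: sets_restrict_space_iff\<close>)
      with emeasure_leb01[of a] a show False by simp
    qed
  qed
  moreover have "ereal (m * (1 - a)) \<le> ereal m" using a m by (simp add: mult_left_le)
  ultimately have "ereal (m * (1 - a)) \<le> esssup (lebesgue_on {0..1}) (\<lambda>x. ereal \<bar>f x\<bar>)"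
    by (rule order_trans[rotated])
  then show ?thesis using True by (simp add: lp_norm_def)
next
  case False
  define q where "q = real_of_ereal p"
  have q: "q \<ge> 1" using p False unfolding q_def by (cases p) auto
  define N where "N = nn_integral (lebesgue_on {0..1}) (\<lambda>x. ennreal (\<bar>f x\<bar> powr q))"
  have "nn_integral (lebesgue_on {0..1}) (\<lambda>x. ennreal (m powr q) * indicator {a..1} x) \<le> N"
    unfolding N_def
  proof (rule nn_integral_mono)
    fix x :: real assume "x \<in> space (lebesgue_on {0..1})"
    show "ennreal (m powr q) * indicator {a..1} x \<le> ennreal (\<bar>f x\<bar> powr q)"
      using b[of x] m q by (auto simp: indicator_def intro!: ennreal_leI powr_mono2)
  qed
  also have "nn_integral (lebesgue_on {0..1}) (\<lambda>x. ennreal (m powr q) * indicator {a..1} x) = ennreal (m powr q * (1 - a))"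
    using a by (subst nn_integral_cmult_indicator) (auto simp: sets_restrict_space_iff emeasure_leb01 ennreal_mult)
  finally have NL: "ennreal (m powr q * (1 - a)) \<le> N" .
  show ?thesis
  proof (cases "N = \<infinity>")
    case True then show ?thesis using False unfolding lp_norm_def by (simp add: Let_def N_def q_def)
  next
    case Nf: False
    have "m powr q * (1 - a) \<le> enn2real N"
    proof -
      have X0: "0 \<le> m powr q * (1-a)" using a by simp
      have "enn2real (ennreal (m powr q * (1-a))) \<le> enn2real N"
        using enn2real_mono[OF NL] Nf by (simp add: less_top)
      then show ?thesis using X0 by simp
    qed
    then have "(m powr q * (1 - a)) powr (1/q) \<le> enn2real N powr (1/q)"
      using q a by (intro powr_mono2) auto
    moreover have "(m powr q * (1 - a)) powr (1/q) = m * (1 - a) powr (1/q)"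
      using q a m by (simp add: powr_mult powr_powr)
    moreover have "(1 - a) powr 1 \<le> (1 - a) powr (1/q)"
      using q a by (intro powr_mono') auto
    ultimately have "m * (1 - a) \<le> enn2real N powr (1/q)"
    proof -
      assume A: "(m powr q * (1 - a)) powr (1/q) \<le> enn2real N powr (1/q)"
        "(m powr q * (1 - a)) powr (1/q) = m * (1 - a) powr (1/q)"
        "(1 - a) powr 1 \<le> (1 - a) powr (1/q)"
      have "m * (1 - a) = m * (1 - a) powr 1" using a by simp
      also have "\<dots> \<le> m * (1 - a) powr (1/q)" using A(3) m by (rule mult_left_mono)
      finally show ?thesis using A(1,2) by linarith
    qed
    then show ?thesis using False Nf unfolding lp_norm_def by (simp add: Let_def N_def q_def)
  qed
qed

lemma gamma_ratio:
  fixes x :: real assumes x: "x > 0"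
  shows "Gamma (x + real M) \<le> (x + real M)^M * Gamma x"
proof (induction M)
  case 0 then show ?case by simp
next
  case (Suc M)
  have nz: "x + real M \<notin> \<int>\<^sub>\<le>\<^sub>0" using x by (auto elim!: nonpos_Ints_cases)
  have "Gamma (x + real (Suc M)) = (x + real M) * Gamma (x + real M)"
    using Gamma_plus1[OF nz] by (simp add: add_ac)
  also have "\<dots> \<le> (x + real M) * ((x + real M)^M * Gamma x)"
    using Suc x by (intro mult_left_mono) auto
  also have "\<dots> \<le> (x + real (Suc M)) * ((x + real (Suc M))^M * Gamma x)"
    using x by (intro mult_mono power_mono mult_right_mono) (auto intro!: mult_nonneg_nonneg less_imp_le[OF Gamma_real_pos])
  finally show ?case by simp
qed

lemma poly_bound:
  fixes P :: "real poly" and x :: real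
  shows "\<bar>poly P x\<bar> \<le> (\<Sum>i\<le>degree P. \<bar>coeff P i\<bar>) * (1 + \<bar>x\<bar>)^degree P"
proof -
  have "\<bar>poly P x\<bar> \<le> (\<Sum>i\<le>degree P. \<bar>coeff P i * x ^ i\<bar>)"
    unfolding poly_altdef by (rule sum_abs)
  also have "\<dots> \<le> (\<Sum>i\<le>degree P. \<bar>coeff P i\<bar> * (1 + \<bar>x\<bar>)^degree P)"
  proof (rule sum_mono)
    fix i assume i: "i \<in> {..degree P}"
    have "\<bar>x\<bar>^i \<le> (1 + \<bar>x\<bar>)^i" by (intro power_mono) auto
    also have "\<dots> \<le> (1 + \<bar>x\<bar>)^degree P" using i by (intro power_increasing) auto
    finally show "\<bar>coeff P i * x ^ i\<bar> \<le> \<bar>coeff P i\<bar> * (1 + \<bar>x\<bar>)^degree P"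
      by (simp add: abs_mult power_abs mult_left_mono)
  qed
  also have "\<dots> = (\<Sum>i\<le>degree P. \<bar>coeff P i\<bar>) * (1 + \<bar>x\<bar>)^degree P"
    by (simp add: sum_distrib_right)
  finally show ?thesis .
qed


theorem lemma4p1:
  fixes k :: "real \<Rightarrow> real" and c \<mu> \<nu> r :: real and p :: ereal
    and \<delta> :: real and j :: nat and P :: "real poly"
  assumes k_meas: "k \<in> borel_measurable (lebesgue_on {0..1})"
    and c_pos: "c > 0" and r_gt: "r > -1"
    and lower: "\<And>t. t \<in> {0<..1} \<Longrightarrow> c * t powr r * exp (\<mu> * t) \<le> k t"
    and upper: "\<And>t. t \<in> {0<..1} \<Longrightarrow> k t \<le> c * t powr r * exp (\<nu> * t)"
    and p_ge: "1 \<le> p"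
    and delta: "0 < \<delta>" "\<delta> < 1"
  shows "((\<lambda>n. poly P (real n)
              * set_lebesgue_integral lebesgue {0..1 - \<delta>} (conv_pow k (n - j))
              / real_of_ereal (op_norm p (volterra k ^^ n))) \<longlonglongrightarrow> 0)"
proof -
  define \<rho> where "\<rho> = r + 1"
  have \<rho>: "\<rho> > 0" using r_gt by (simp add: \<rho>_def)
  obtain kb where kbm[measurable]: "kb \<in> borel_measurable borel"
    and kbnd: "\<forall>t\<in>{0..1}. c * t powr r * exp (\<mu> * t) \<le> kb t \<and> kb t \<le> c * t powr r * exp (\<nu> * t)"
    and aek: "AE x in lborel. x \<in> {0<..1} \<longrightarrow> k x = kb x"
    using kb_exists[OF k_meas lower upper] by blast
  have kl: "\<And>t. t\<in>{0..1} \<Longrightarrow> c * t powr r * exp(\<mu>*t) \<le> kb t"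
    and ku: "\<And>t. t\<in>{0..1} \<Longrightarrow> kb t \<le> c * t powr r * exp(\<nu>*t)" using kbnd by auto
  define M where "M = nat \<lceil>real j * \<rho>\<rceil> + 1"
  define \<beta> where "\<beta> = real M - real j * \<rho> - 1"
  have \<beta>0: "\<beta> \<ge> 0" unfolding \<beta>_def M_def using real_nat_ceiling_ge[of "real j * \<rho>"] by simp
  define u where "u = (\<lambda>t::real. t powr \<beta>)"
  have um[measurable]: "u \<in> borel_measurable borel" unfolding u_def by measurable
  have ul: "exp(-\<bar>\<mu>\<bar>) * t powr \<beta> * exp(\<mu>*t) \<le> u t" if t: "t\<in>{0..1}" for t
  proof -
    have "\<mu> * t \<le> \<bar>\<mu>\<bar> * t" using t by (intro mult_right_mono) auto
    also have "\<bar>\<mu>\<bar> * t \<le> \<bar>\<mu>\<bar>" using t by (intro mult_left_le) auto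
    finally have "exp(-\<bar>\<mu>\<bar>) * exp(\<mu>*t) \<le> 1" by (simp add: exp_add[symmetric])
    then have "t powr \<beta> * (exp(-\<bar>\<mu>\<bar>) * exp(\<mu>*t)) \<le> t powr \<beta> * 1" by (intro mult_left_mono) auto
    then show ?thesis unfolding u_def by (simp add: mult_ac)
  qed
  have uu: "u t \<le> exp \<bar>\<nu>\<bar> * t powr \<beta> * exp(\<nu>*t)" if t: "t\<in>{0..1}" for t
  proof -
    have "-(\<nu> * t) \<le> \<bar>\<nu>\<bar> * t" using t mult_right_mono[of "-\<nu>" "\<bar>\<nu>\<bar>" t] by auto
    also have "\<bar>\<nu>\<bar> * t \<le> \<bar>\<nu>\<bar>" using t by (intro mult_left_le) auto
    finally have "1 \<le> exp \<bar>\<nu>\<bar> * exp(\<nu>*t)" by (simp add: exp_add[symmetric])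
    then have "t powr \<beta> * 1 \<le> t powr \<beta> * (exp \<bar>\<nu>\<bar> * exp(\<nu>*t))" by (intro mult_left_mono) auto
    then show ?thesis unfolding u_def by (simp add: mult_ac)
  qed
  have H: "(conv kb ^^ n) u \<in> borel_measurable borel \<and>
    (\<forall>t\<in>{0..1}. exp(-\<bar>\<mu>\<bar>) * Gamma (\<beta>+1) * (c * Gamma (r+1))^n / Gamma (\<beta>+1+n*(r+1)) * t powr (\<beta> + n*(r+1)) * exp(\<mu>*t) \<le> (conv kb ^^ n) u t
      \<and> (conv kb ^^ n) u t \<le> exp \<bar>\<nu>\<bar> * Gamma (\<beta>+1) * (c * Gamma (r+1))^n / Gamma (\<beta>+1+n*(r+1)) * t powr (\<beta> + n*(r+1)) * exp(\<nu>*t))" for n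
    by (rule conv_iter[OF kbm um c_pos r_gt _ _ kl ku ul uu]) (use \<beta>0 in auto)
  have Gc: "(conv kb ^^ n) kb \<in> borel_measurable borel \<and>
    (\<forall>t\<in>{0..1}. c * Gamma (r+1) * (c * Gamma (r+1))^n / Gamma (r+1+n*(r+1)) * t powr (r + n*(r+1)) * exp(\<mu>*t) \<le> (conv kb ^^ n) kb t
      \<and> (conv kb ^^ n) kb t \<le> c * Gamma (r+1) * (c * Gamma (r+1))^n / Gamma (r+1+n*(r+1)) * t powr (r + n*(r+1)) * exp(\<nu>*t))" for n
    by (rule conv_iter[OF kbm kbm c_pos r_gt r_gt _ kl ku kl ku]) (use c_pos in auto)
  have R1: "\<forall>t\<in>{0..1}. (volterra k ^^ n) u t = (conv kb ^^ n) u t" for n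
  proof (induction n)
    case 0 then show ?case by simp
  next
    case (Suc n)
    show ?case
    proof
      fix t :: real assume t: "t \<in> {0..1}"
      have "(volterra k ^^ Suc n) u t = conv k ((volterra k ^^ n) u) t" by (simp add: volterra_def)
      also have "\<dots> = conv kb ((conv kb ^^ n) u) t"
        by (rule conv_cong_kb[OF kbm conjunct1[OF H[of n]] aek t]) (use Suc t in \<open>auto intro!: AE_I2\<close>)
      finally show "(volterra k ^^ Suc n) u t = (conv kb ^^ Suc n) u t" by simp
    qed
  qed
  have R2: "\<forall>t\<in>{0..1}. conv_pow k (Suc (Suc m)) t = (conv kb ^^ Suc m) kb t" for m
  proof (induction m)
    case 0
    show ?case
    proof
      fix t :: real assume t: "t \<in> {0..1}"
      have a2: "AE s in lborel. s \<noteq> 0" by (rule AE_lborel_singleton)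
      have "AE s in lborel. s \<in> {0..t} \<longrightarrow> k s = kb s"
        using aek a2 by eventually_elim (use t in auto)
      then have "conv k k t = conv kb kb t" by (rule conv_cong_kb[OF kbm kbm aek t])
      then show "conv_pow k (Suc (Suc 0)) t = (conv kb ^^ Suc 0) kb t" by simp
    qed
  next
    case (Suc m)
    show ?case
    proof
      fix t :: real assume t: "t \<in> {0..1}"
      have "conv_pow k (Suc (Suc (Suc m))) t = conv k (conv_pow k (Suc (Suc m))) t" by simp
      also have "\<dots> = conv kb ((conv kb ^^ Suc m) kb) t"
        by (rule conv_cong_kb[OF kbm conjunct1[OF Gc[of "Suc m"]] aek t]) (use Suc t in \<open>auto intro!: AE_I2\<close>)
      finally show "conv_pow k (Suc (Suc (Suc m))) t = (conv kb ^^ Suc (Suc m)) kb t" by simp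
    qed
  qed
  have ufeas: "u \<in> borel_measurable (lebesgue_on {0..1}) \<and> lp_norm p u \<le> 1"
  proof
    show "u \<in> borel_measurable (lebesgue_on {0..1})"
      by (rule measurable_restrict_space1, rule measurable_completion) simp
    then show "lp_norm p u \<le> 1"
      by (rule lp_le1[OF p_ge, rotated]) (use \<beta>0 in \<open>auto simp: u_def powr_le1\<close>)
  qed
  define a where "a = 1 - \<delta>/2"
  have a: "0 < a" "a < 1" "1 - a = \<delta>/2" "1 - \<delta> < a" using delta by (auto simp: a_def)
  define q where "q = ((1-\<delta>)/a) powr \<rho>"
  have q: "0 < q" "q < 1"
  proof -
    have "(1-\<delta>)/a < 1" "0 < (1-\<delta>)/a" using a delta by auto
    then show "0 < q" "q < 1" unfolding q_def using \<rho> powr_less_mono2[of \<rho> "(1-\<delta>)/a" 1] by auto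
  qed
  define X where "X = c * Gamma \<rho>"
  have X: "X > 0" unfolding X_def using c_pos \<rho> by simp
  define S where "S = (\<Sum>i\<le>degree P. \<bar>coeff P i\<bar>)"
  have S: "S \<ge> 0" unfolding S_def by (intro sum_nonneg) auto
  define C1 where "C1 = exp \<bar>\<nu>\<bar> / (exp(-\<bar>\<mu>\<bar>) * exp(-\<bar>\<mu>\<bar>) * Gamma (\<beta>+1) * X^j * (1-\<delta>) powr (real j * \<rho>) * a powr \<beta> * (\<delta>/2))"
  define K where "K = S * (\<rho> + real M)^M * C1"
  define Z where "Z = nat \<lceil>1/\<rho>\<rceil>"
  define n0 where "n0 = j + 2 + Z"
  define tm where "tm n = poly P (real n) * set_lebesgue_integral lebesgue {0..1 - \<delta>} (conv_pow k (n - j))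
              / real_of_ereal (op_norm p (volterra k ^^ n))" for n
  have bound: "norm (tm n) \<le> K * real (n+1)^(degree P + M) * q^n" if n: "n \<ge> n0" for n
  proof -
    define N where "N = n - j"
    have nN: "n = N + j" and N2: "N \<ge> 2" and N3: "N \<ge> Z" using n unfolding N_def n0_def by auto
    have N\<rho>: "real N * \<rho> \<ge> 1"
    proof -
      have "real Z \<le> real N" using N3 by (simp only: of_nat_le_iff)
      then have "1/\<rho> \<le> real N" using real_nat_ceiling_ge[of "1/\<rho>"] unfolding Z_def by linarith
      then have "1/\<rho> * \<rho> \<le> real N * \<rho>" using \<rho> by (intro mult_right_mono) auto
      then show ?thesis using \<rho> by simp
    qed
    define m where "m = N - 2"
    have Nm: "N = Suc (Suc m)" using N2 unfolding m_def by simp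
    define \<gamma> where "\<gamma> = r + real (Suc m) * (r+1)"
    have \<gamma>: "\<gamma> = real N * \<rho> - 1" unfolding \<gamma>_def \<rho>_def Nm by (simp add: algebra_simps)
    have \<gamma>0: "\<gamma> \<ge> 0" using \<gamma> N\<rho> by simp
    define Gf where "Gf = (conv kb ^^ Suc m) kb"
    have Gfm[measurable]: "Gf \<in> borel_measurable borel" using Gc[of "Suc m"] unfolding Gf_def by blast
    define Fg where "Fg = c * Gamma (r+1) * (c * Gamma (r+1))^(Suc m) / Gamma (r+1+real (Suc m)*(r+1))"
    have Fg_eq: "Fg = X^N / Gamma (real N * \<rho>)"
    proof -
      have "r+1+real (Suc m)*(r+1) = real N * \<rho>" unfolding Nm \<rho>_def by (simp add: algebra_simps)
      moreover have "c * Gamma (r+1) * (c * Gamma (r+1))^(Suc m) = X^N" unfolding X_def \<rho>_def Nm by simp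
      ultimately show ?thesis unfolding Fg_def by simp
    qed
    have Fg0: "Fg \<ge> 0" unfolding Fg_eq
      by (intro divide_nonneg_nonneg zero_le_power Gamma_real_nonneg) (use X N\<rho> in auto)
    have Gfb: "0 \<le> Gf t \<and> Gf t \<le> Fg * t powr \<gamma> * exp(\<nu>*t)" if t: "t \<in> {0..1}" for t
    proof -
      have "Fg * t powr \<gamma> * exp(\<mu>*t) \<le> Gf t \<and> Gf t \<le> Fg * t powr \<gamma> * exp(\<nu>*t)"
        using Gc[of "Suc m"] t unfolding Fg_def[symmetric] \<gamma>_def[symmetric] Gf_def[symmetric] by blast
      moreover have "0 \<le> Fg * t powr \<gamma> * exp(\<mu>*t)" using Fg0 by simp
      ultimately show ?thesis by linarith
    qed
    define B where "B = Fg * exp \<bar>\<nu>\<bar> * (1-\<delta>) powr \<gamma>"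
    have B0: "B \<ge> 0" unfolding B_def using Fg0 by simp
    have Gfle: "norm (Gf t) \<le> norm B" if t: "t \<in> {0..1-\<delta>}" for t
    proof -
      have t1: "t \<in> {0..1}" using t delta by auto
      have "t powr \<gamma> \<le> (1-\<delta>) powr \<gamma>" using t \<gamma>0 by (intro powr_mono2) auto
      moreover have "exp(\<nu>*t) \<le> exp \<bar>\<nu>\<bar>"
      proof -
        have "\<nu> * t \<le> \<bar>\<nu>\<bar> * t" using t by (intro mult_right_mono) auto
        also have "\<bar>\<nu>\<bar> * t \<le> \<bar>\<nu>\<bar>" using t1 by (intro mult_left_le) auto
        finally show ?thesis by simp
      qed
      ultimately have "Fg * t powr \<gamma> * exp(\<nu>*t) \<le> Fg * (1-\<delta>) powr \<gamma> * exp \<bar>\<nu>\<bar>"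
        using Fg0 by (intro mult_mono mult_left_mono) auto
      then show ?thesis using Gfb[OF t1] B0 unfolding B_def by (simp add: mult_ac)
    qed
    have iB: "set_integrable lebesgue {0..1-\<delta>} (\<lambda>_. B)"
      unfolding absolutely_integrable_on_def[symmetric]
      by (rule nonnegative_absolutely_integrable_1) (use B0 in auto)
    have iG: "set_integrable lebesgue {0..1-\<delta>} Gf"
    proof (rule set_integrable_bound[OF iB])
      show "set_borel_measurable lebesgue {0..1-\<delta>} Gf"
        unfolding set_borel_measurable_def by (rule measurable_completion) measurable
      show "AE x in lebesgue. x \<in> {0..1-\<delta>} \<longrightarrow> norm (Gf x) \<le> norm B"
        using Gfle by (intro AE_I2) auto
    qed
    have num_eq: "set_lebesgue_integral lebesgue {0..1-\<delta>} (conv_pow k (n-j)) = (LINT t:{0..1-\<delta>}|lebesgue. Gf t)"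
    proof -
      have "(LINT t:{0..1-\<delta>}|lebesgue. conv_pow k N t) = (LINT t:{0..1-\<delta>}|lebesgue. Gf t)"
        by (rule set_lebesgue_integral_cong) (use R2[of m] delta in \<open>auto simp: Nm Gf_def\<close>)
      then show ?thesis unfolding N_def by simp
    qed
    have num0: "0 \<le> (LINT t:{0..1-\<delta>}|lebesgue. Gf t)"
      unfolding set_lebesgue_integral_def
      by (rule integral_nonneg_AE, rule AE_I2) (use Gfb delta in \<open>auto simp: indicator_def\<close>)
    have "(LINT t:{0..1-\<delta>}|lebesgue. Gf t) \<le> (LINT t:{0..1-\<delta>}|lebesgue. B)"
    proof (rule set_integral_mono[OF iG iB])
      fix t assume t: "t \<in> {0..1-\<delta>}"
      have "\<bar>Gf t\<bar> \<le> \<bar>B\<bar>" using Gfle[OF t] by simp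
      then show "Gf t \<le> B" using B0 abs_ge_self[of "Gf t"] by linarith
    qed
    also have "(LINT t:{0..1-\<delta>}|lebesgue. B) = B * (1-\<delta>)"
      using delta by (subst set_integral_const) auto
    finally have numle: "\<bar>set_lebesgue_integral lebesgue {0..1-\<delta>} (conv_pow k (n-j))\<bar> \<le> B * (1-\<delta>)"
      using num0 unfolding num_eq by simp
    define Lh where "Lh = exp(-\<bar>\<mu>\<bar>) * Gamma (\<beta>+1) * (c * Gamma (r+1))^n / Gamma (\<beta>+1+n*(r+1))"
    define e where "e = \<beta> + n*(r+1)"
    have Lh_eq: "Lh = exp(-\<bar>\<mu>\<bar>) * Gamma (\<beta>+1) * X^n / Gamma (real N * \<rho> + real M)"
    proof -
      have "\<beta>+1+n*(r+1) = real N * \<rho> + real M" unfolding \<beta>_def \<rho>_def nN by (simp add: algebra_simps)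
      then show ?thesis unfolding Lh_def X_def \<rho>_def by simp
    qed
    have Lh0: "Lh > 0" unfolding Lh_eq using X N\<rho> \<beta>0 by simp
    define mH where "mH = Lh * a powr e * exp(-\<bar>\<mu>\<bar>)"
    have mH0: "mH > 0" unfolding mH_def using Lh0 a by simp
    have lowH: "mH \<le> \<bar>(volterra k ^^ n) u x\<bar>" if x: "x \<in> {a..1}" for x
    proof -
      have x1: "x \<in> {0..1}" using x a by auto
      have e0: "e \<ge> 0" unfolding e_def using \<beta>0 r_gt by simp
      have "Lh * x powr e * exp(\<mu>*x) \<le> (conv kb ^^ n) u x"
        using H[of n] x1 unfolding Lh_def[symmetric] e_def[symmetric] by blast
      moreover have "a powr e \<le> x powr e" using x a e0 by (intro powr_mono2) auto
      moreover have "exp(-\<bar>\<mu>\<bar>) \<le> exp(\<mu>*x)"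
      proof -
        have "-\<bar>\<mu>\<bar> \<le> -\<bar>\<mu>\<bar> * x" using x1 by (simp add: mult_left_le)
        also have "-\<bar>\<mu>\<bar> * x \<le> \<mu> * x" using x1 by (intro mult_right_mono) auto
        finally show ?thesis by simp
      qed
      ultimately have "mH \<le> (conv kb ^^ n) u x"
      proof -
        assume A: "Lh * x powr e * exp(\<mu>*x) \<le> (conv kb ^^ n) u x" "a powr e \<le> x powr e" "exp(-\<bar>\<mu>\<bar>) \<le> exp(\<mu>*x)"
        have "a powr e * exp(-\<bar>\<mu>\<bar>) \<le> x powr e * exp(\<mu>*x)"
          by (rule mult_mono[OF A(2) A(3)]) auto
        then have "Lh * (a powr e * exp(-\<bar>\<mu>\<bar>)) \<le> Lh * (x powr e * exp(\<mu>*x))"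
          by (rule mult_left_mono) (use Lh0 in simp)
        then show ?thesis using A(1) unfolding mH_def by (simp add: mult.assoc)
      qed
      then show ?thesis using R1[of n] x1 by simp
    qed
    have Dge: "ereal (mH * (1-a)) \<le> op_norm p (volterra k ^^ n)"
    proof -
      have "ereal (mH * (1-a)) \<le> lp_norm p ((volterra k ^^ n) u)"
        by (rule lp_ge[OF p_ge a(1) a(2) _ lowH]) (use mH0 in auto)
      also have "lp_norm p ((volterra k ^^ n) u) \<le> op_norm p (volterra k ^^ n)"
        unfolding op_norm_def by (rule Sup_upper) (use ufeas in blast)
      finally show ?thesis .
    qed
    have K0: "K \<ge> 0" unfolding K_def C1_def using S \<rho> X a delta \<beta>0 by simp
    have step1: "norm (tm n) \<le> \<bar>poly P (real n)\<bar> * (B * (1-\<delta>)) / (mH * (1-a))"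
    proof (cases "op_norm p (volterra k ^^ n)")
      case (real d)
      have dge: "mH * (1-a) \<le> d" using Dge real by simp
      have dpos: "mH * (1-a) > 0" using mH0 a by simp
      have "norm (tm n) = \<bar>poly P (real n)\<bar> * \<bar>set_lebesgue_integral lebesgue {0..1-\<delta>} (conv_pow k (n-j))\<bar> / d"
        unfolding tm_def real using dge dpos by (simp add: abs_mult)
      also have "\<dots> \<le> \<bar>poly P (real n)\<bar> * (B * (1-\<delta>)) / (mH * (1-a))"
        by (intro frac_le mult_left_mono numle dge dpos) (use B0 delta in auto)
      finally show ?thesis .
    next
      case PInf
      then have "tm n = 0" unfolding tm_def by simp
      then show ?thesis using B0 delta mH0 a by simp
    next
      case MInf
      then show ?thesis using Dge by simp
    qed
    have eq: "(B * (1-\<delta>)) / (mH * (1-a)) = C1 * (Gamma (real N * \<rho> + real M) / Gamma (real N * \<rho>)) * q^n"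
    proof -
      have d1: "1 - \<delta> > 0" using delta by simp
      have "(1-\<delta>) powr \<gamma> * (1-\<delta>) = (1-\<delta>) powr (\<gamma> + 1)"
        using d1 powr_add[of "1-\<delta>" \<gamma> 1] by simp
      also have "\<gamma> + 1 = real n * \<rho> - real j * \<rho>" unfolding \<gamma> nN by (simp add: algebra_simps)
      also have "(1-\<delta>) powr (real n * \<rho> - real j * \<rho>) = (1-\<delta>) powr (real n * \<rho>) / (1-\<delta>) powr (real j * \<rho>)"
        by (rule powr_diff)
      finally have f1: "(1-\<delta>) powr \<gamma> * (1-\<delta>) = (1-\<delta>) powr (real n * \<rho>) / (1-\<delta>) powr (real j * \<rho>)" .
      have f2: "a powr e = a powr \<beta> * a powr (real n * \<rho>)"
        unfolding e_def \<rho>_def by (simp add: powr_add)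
      have f3: "q^n = (1-\<delta>) powr (real n * \<rho>) / a powr (real n * \<rho>)"
      proof -
        have qa: "(1-\<delta>)/a > 0" using d1 a by simp
        have "q^n = q powr (real n)" using q by (simp add: powr_realpow)
        also have "\<dots> = ((1-\<delta>)/a) powr (real n * \<rho>)" unfolding q_def by (simp add: powr_powr mult.commute)
        also have "\<dots> = (1-\<delta>) powr (real n * \<rho>) / a powr (real n * \<rho>)"
          using d1 a by (simp add: powr_divide)
        finally show ?thesis .
      qed
      have f4: "X^n = X^N * X^j" unfolding nN by (simp add: power_add)
      have pos: "Gamma (real N*\<rho>) > 0" "Gamma (real N*\<rho> + real M) > 0" "Gamma (\<beta>+1) > 0"
        "(1-\<delta>) powr (real j*\<rho>) > 0" "(1-\<delta>) powr (real n*\<rho>) > 0" "a powr \<beta> > 0" "a powr (real n*\<rho>) > 0"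
        using N\<rho> \<beta>0 d1 a by auto
      have eB: "B*(1-\<delta>) = X^N / Gamma (real N * \<rho>) * exp \<bar>\<nu>\<bar> * ((1-\<delta>) powr (real n * \<rho>) / (1-\<delta>) powr (real j * \<rho>))"
        unfolding B_def Fg_eq f1[symmetric] by (simp add: mult.assoc)
      have eM: "mH*(1-a) = exp(-\<bar>\<mu>\<bar>) * Gamma (\<beta>+1) * (X^N * X^j) / Gamma (real N * \<rho> + real M) * (a powr \<beta> * a powr (real n * \<rho>)) * exp(-\<bar>\<mu>\<bar>) * (\<delta>/2)"
        unfolding mH_def Lh_eq f2 f4[symmetric] a(3) by simp
      show ?thesis unfolding eB eM C1_def f3 using pos X delta
        by (simp add: field_simps)
    qed
    have gr: "Gamma (real N * \<rho> + real M) / Gamma (real N * \<rho>) \<le> (\<rho> + real M)^M * real (n+1)^M"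
    proof -
      have gp: "Gamma (real N * \<rho>) > 0" using N\<rho> by simp
      have "Gamma (real N * \<rho> + real M) \<le> (real N * \<rho> + real M)^M * Gamma (real N * \<rho>)"
        by (rule gamma_ratio) (use N\<rho> in simp)
      then have "Gamma (real N * \<rho> + real M) / Gamma (real N * \<rho>) \<le> (real N * \<rho> + real M)^M"
        using gp by (simp add: divide_le_eq)
      also have "\<dots> \<le> ((\<rho> + real M) * real (n+1))^M"
      proof (intro power_mono)
        have "real N \<le> real (n+1)" using nN by simp
        then have "real N * \<rho> \<le> real (n+1) * \<rho>" using \<rho> by (intro mult_right_mono) auto
        moreover have "0 \<le> real M * real n" by simp
        moreover have "(\<rho> + real M) * real (n+1) = real (n+1) * \<rho> + real M + real M * real n"
          by (simp add: algebra_simps)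
        ultimately show "real N * \<rho> + real M \<le> (\<rho> + real M) * real (n+1)" by linarith
        show "0 \<le> real N * \<rho> + real M" using \<rho> by simp
      qed
      finally show ?thesis by (simp add: power_mult_distrib)
    qed
    have pb: "\<bar>poly P (real n)\<bar> \<le> S * real (n+1)^(degree P)"
      using poly_bound[of P "real n"] unfolding S_def by (simp add: add_ac)
    have C10: "C1 \<ge> 0" unfolding C1_def using X a delta \<beta>0 by simp
    have "norm (tm n) \<le> \<bar>poly P (real n)\<bar> * (C1 * (Gamma (real N * \<rho> + real M) / Gamma (real N * \<rho>)) * q^n)"
    proof -
      have "\<bar>poly P (real n)\<bar> * (B * (1-\<delta>)) / (mH * (1-a)) = \<bar>poly P (real n)\<bar> * ((B * (1-\<delta>)) / (mH * (1-a)))"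
        by (rule times_divide_eq_right[symmetric])
      then show ?thesis using step1 unfolding eq by simp
    qed
    also have "\<dots> \<le> (S * real (n+1)^(degree P)) * (C1 * ((\<rho> + real M)^M * real (n+1)^M) * q^n)"
    proof -
      have g0: "0 \<le> Gamma (real N * \<rho> + real M) / Gamma (real N * \<rho>)" using N\<rho> by simp
      have g1: "0 \<le> (\<rho> + real M)^M * real (n+1)^M" using \<rho> by simp
      have A1: "C1 * (Gamma (real N * \<rho> + real M) / Gamma (real N * \<rho>)) * q^n \<le> C1 * ((\<rho> + real M)^M * real (n+1)^M) * q^n"
        using gr C10 q by (intro mult_right_mono mult_left_mono) auto
      have A2: "0 \<le> C1 * (Gamma (real N * \<rho> + real M) / Gamma (real N * \<rho>)) * q^n"
        using g0 C10 q by (intro mult_nonneg_nonneg) auto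
      have A3: "0 \<le> S * real (n+1)^(degree P)" using S by simp
      show ?thesis by (rule mult_mono[OF pb A1 A3 A2])
    qed
    also have "\<dots> = K * real (n+1)^(degree P + M) * q^n"
      unfolding K_def by (simp add: power_add mult_ac)
    finally show ?thesis .
  qed
  have "(\<lambda>n. K * real (n+1)^(degree P + M) * q^n) \<longlonglongrightarrow> 0"
    using q by real_asymp
  then have "tm \<longlonglongrightarrow> 0"
    by (rule Lim_null_comparison[rotated]) (use bound in \<open>auto simp: eventually_at_top_linorder\<close>)
  then show ?thesis unfolding tm_def .
qed

end
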